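(* Let $\Sigma$ be a finite alphabet and let $X,Y\subseteq\Sigma^{\mathbb{Z}}$ be constrained systems. Suppose that $X$ is primitive or $Y$ is primitive. Then the sequence $\left(\frac{1}{n}R(\mathscr{B}_n(X),\mathscr{B}_n(Y))\right)_{n\in\mathbb{N}}$ converges; that is, \[R(X,Y)=\lim_{n\to\infty}\frac{R(\mathscr{B}_n(X),\mathscr{B}_n(Y))}{n}.\]
   Context: $\Sigma^{\mathbb{Z}}$ carries the product topology (discrete on $\Sigma$) and the shift $T$, $(T\mathbf{x})_n=\mathbf{x}_{n+1}$. A constrained system is a set $X\subseteq\Sigma^{\mathbb{Z}}$ for which there is a finite directed graph $G=(V,E)$ with a labeling $L:E\to\Sigma$ such that $X$ is the set of label sequences $(L(e_i))_{i\in\mathbb{Z}}$ of bi-infinite directed paths $(e_i)_{i\in\mathbb{Z}}$ in $G$. A labeled graph is irreducible if any two vertices are joined by a directed path, and primitive if it is irreducible and the gcd of its cycle lengths is $1$ (equivalently, there is $n$ such that any two vertices are joined by a directed path of length exactly $n$). $X$ is primitive if it is presented by some primitive labeled graph. The language $\mathscr{B}_n(X)\subseteq\Sigma^n$ is the set of length-$n$ words appearing as consecutive subwords of some element of $X$. For $\overline{u},\overline{v}\in\Sigma^n$, $d(\overline{u},\overline{v})$ is the Hamming distance. For $A,C\subseteq\Sigma^n$, $R(C,A)=\max_{\overline{y}\in A}\min_{\overline{x}\in C}d(\overline{x},\overline{y})$. For shift spaces $X,Y$, $R(X,Y)=\liminf_{n\to\infty}\frac{1}{n}R(\mathscr{B}_n(X),\mathscr{B}_n(Y))$.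 *)

theory Defs
  imports "HOL-Analysis.Analysis" "HOL-Library.Liminf_Limsup"
begin

text \<open>A finite labeled directed graph: a finite vertex set V and a finite set of labeled
  edges (u, a, v) with u, v in V.  (Parallel edges with equal label are irrelevant for the
  presented system, so a set of triples suffices.)\<close>

definition labeled_graph :: "'v set \<Rightarrow> ('v \<times> 'a \<times> 'v) set \<Rightarrow> bool" where
  "labeled_graph V E \<longleftrightarrow> finite V \<and> finite E \<and> E \<subseteq> V \<times> UNIV \<times> V"

definition presented :: "('v \<times> 'a \<times> 'v) set \<Rightarrow> (int \<Rightarrow> 'a) set" where
  "presented E = {x. \<exists>p :: int \<Rightarrow> 'v. \<forall>i. (p i, x i, p (i + 1)) \<in> E}"

definition has_path :: "('v \<times> 'a \<times> 'v) set \<Rightarrow> nat \<Rightarrow> 'v \<Rightarrow> 'v \<Rightarrow> bool" where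
  "has_path E n u v \<longleftrightarrow> (\<exists>q :: nat \<Rightarrow> 'v. q 0 = u \<and> q n = v \<and>
      (\<forall>i<n. \<exists>a. (q i, a, q (Suc i)) \<in> E))"

definition irreducible_graph :: "'v set \<Rightarrow> ('v \<times> 'a \<times> 'v) set \<Rightarrow> bool" where
  "irreducible_graph V E \<longleftrightarrow> (\<forall>u\<in>V. \<forall>v\<in>V. \<exists>n. has_path E n u v)"

definition primitive_graph :: "'v set \<Rightarrow> ('v \<times> 'a \<times> 'v) set \<Rightarrow> bool" where
  "primitive_graph V E \<longleftrightarrow> irreducible_graph V E \<and>
     Gcd {n. n > 0 \<and> (\<exists>u\<in>V. has_path E n u u)} = (1::nat)"

definition constrained_system :: "(int \<Rightarrow> 'a) set \<Rightarrow> bool" where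
  "constrained_system X \<longleftrightarrow>
     (\<exists>(V :: nat set) E. labeled_graph V E \<and> X = presented E)"

definition primitive_system :: "(int \<Rightarrow> 'a) set \<Rightarrow> bool" where
  "primitive_system X \<longleftrightarrow>
     (\<exists>(V :: nat set) E. labeled_graph V E \<and> primitive_graph V E \<and> X = presented E)"

definition lang :: "(int \<Rightarrow> 'a) set \<Rightarrow> nat \<Rightarrow> 'a list set" where
  "lang X n = {map (\<lambda>i. x (k + int i)) [0..<n] | x k. x \<in> X}"

definition hamming :: "'a list \<Rightarrow> 'a list \<Rightarrow> nat" where
  "hamming u v = card {i. i < length u \<and> i < length v \<and> u ! i \<noteq> v ! i}"

definition covering_radius :: "'a list set \<Rightarrow> 'a list set \<Rightarrow> nat" where
  "covering_radius C A = Max ((\<lambda>y. Min ((\<lambda>x. hamming x y) ` C)) ` A)"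

definition R_shift :: "(int \<Rightarrow> 'a) set \<Rightarrow> (int \<Rightarrow> 'a) set \<Rightarrow> ereal" where
  "R_shift X Y = liminf (\<lambda>n. ereal (real (covering_radius (lang X n) (lang Y n)) / real n))"

end

theory Submission
  imports Defs
begin


lemma superadd_iter:
  fixes r :: "nat \<Rightarrow> nat"
  assumes sa: "\<And>a b. r a + r b \<le> r (a + m + b)"
  shows "q * r k \<le> r (q * (k + m))"
proof (induction q)
  case 0 then show ?case by simp
next
  case (Suc q)
  have "Suc q * (k + m) = q * (k + m) + m + k" by simp
  then have "r (Suc q * (k + m)) \<ge> r (q * (k + m)) + r k" by (metis sa)
  then show ?case using Suc by simp
qed

lemma aux_ineq:
  fixes a b K N :: real
  assumes "K > 0" "N > 0" "a * N \<le> b * K + K * K"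
  shows "a / K - K / N \<le> b / N"
proof -
  have "a / K - K / N = (a * N - K * K) / (K * N)" using assms by (simp add: field_simps)
  also have "\<dots> \<le> (b * K) / (K * N)" using assms by (intro divide_right_mono) auto
  also have "\<dots> = b / N" using assms by simp
  finally show ?thesis .
qed

lemma fekete_gap:
  fixes r :: "nat \<Rightarrow> nat"
  assumes bnd: "\<And>n. r n \<le> n"
    and mono: "\<And>n. r n \<le> r (Suc n)"
    and sa: "\<And>a b. r a + r b \<le> r (a + m + b)"
  shows "convergent (\<lambda>n. real (r n) / real n)"
proof -
  define f where "f k = real (r k) / real (k + m)" for k
  define L where "L = (SUP k. f k)"
  have f01: "0 \<le> f k \<and> f k \<le> 1" for k
    using bnd[of k] by (auto simp: f_def divide_le_eq_1)
  have bdd: "bdd_above (range f)" using f01 by (intro bdd_aboveI[of _ 1]) auto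
  have fL: "f k \<le> L" for k unfolding L_def by (rule cSUP_upper[OF _ bdd]) simp
  have L0: "0 \<le> L" using fL[of 0] f01[of 0] by linarith
  have upper: "real (r n) / real n \<le> L + real m / real (n + m)" if "n > 0" for n
  proof -
    have "real (r n) / real n - f n = real (r n) * real m / (real n * real (n + m))"
      using that by (simp add: f_def field_simps)
    also have "\<dots> \<le> real n * real m / (real n * real (n + m))"
      using bnd[of n] that by (intro divide_right_mono mult_right_mono) auto
    also have "\<dots> = real m / real (n + m)" using that by simp
    finally show ?thesis using fL[of n] by linarith
  qed
  have lower: "f k - real (k + m) / real n \<le> real (r n) / real n" if "n > 0" for n k
  proof (cases "k + m = 0")
    case True then show ?thesis by (simp add: f_def)
  next
    case False
    define q where "q = n div (k + m)"
    have "q * (k + m) \<le> n" unfolding q_def by (simp add: div_times_less_eq_dividend)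
    then have "r (q * (k + m)) \<le> r n" by (rule lift_Suc_mono_le[where f=r, OF mono])
    with superadd_iter[OF sa, of q k] have qr: "q * r k \<le> r n" by simp
    have nd: "n = q * (k + m) + n mod (k + m)" unfolding q_def by (metis div_mult_mod_eq)
    have "n mod (k + m) < k + m" using False by simp
    moreover have "real n = real q * real (k + m) + real (n mod (k + m))"
      by (metis nd of_nat_add of_nat_mult)
    ultimately have qn: "real n \<le> real q * real (k + m) + real (k + m)" by simp
    have rk: "real (r k) \<le> real (k + m)" using bnd[of k] by simp
    have qr': "real q * real (r k) \<le> real (r n)" using qr by (metis of_nat_le_iff of_nat_mult)
    have "real (r k) * (real q * real (k + m)) = (real q * real (r k)) * real (k + m)" by simp
    also have "\<dots> \<le> real (r n) * real (k + m)" by (rule mult_right_mono[OF qr']) simp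
    finally have s1: "real (r k) * (real q * real (k + m)) \<le> real (r n) * real (k + m)" .
    have s2: "real (r k) * real (k + m) \<le> real (k + m) * real (k + m)" by (rule mult_right_mono[OF rk]) simp
    have "real (r k) * real n \<le> real (r k) * (real q * real (k + m)) + real (r k) * real (k + m)"
      using qn by (metis distrib_left mult_left_mono of_nat_0_le_iff)
    also have "\<dots> \<le> real (r n) * real (k + m) + real (k + m) * real (k + m)"
      using s1 s2 by (rule add_mono)
    finally have key: "real (r k) * real n \<le> real (r n) * real (k + m) + real (k + m) * real (k + m)" .
    have kp: "real (k + m) > 0" using False by (simp only: of_nat_0_less_iff)
    show ?thesis unfolding f_def by (rule aux_ineq[OF kp _ key]) (use that in simp)
  qed
  have "(\<lambda>n. real (r n) / real n) \<longlonglongrightarrow> L"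
  proof (rule LIMSEQ_I)
    fix e :: real assume e: "0 < e"
    have "L - e / 2 < L" using e by simp
    then obtain k where k: "L - e / 2 < f k" unfolding L_def using less_cSUP_iff[OF _ bdd] by auto
    obtain N :: nat where N: "real N > 2 * real (k + m) / e + 2 * real m / e + 1"
      using reals_Archimedean2 by blast
    have "\<forall>n\<ge>N. norm (real (r n) / real n - L) < e"
    proof (intro allI impI)
      fix n assume nN: "N \<le> n"
      then have nN': "real N \<le> real n" by simp
      have pos: "0 \<le> 2 * real (k + m) / e" "0 \<le> 2 * real m / e" using e by auto
      have npos: "n > 0" using N nN' pos by (cases n) auto
      have rn: "real n > 0" using npos by simp
      have "real n * e > 2 * real (k + m)"
        using N nN' pos e by (smt (verit, ccfv_SIG) divide_less_eq mult.commute)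
      then have a1: "real (k + m) / real n < e / 2" using rn by (simp add: field_simps)
      have "real n * e > 2 * real m" using N nN' pos e by (smt (verit, ccfv_SIG) divide_less_eq mult.commute)
      then have "real m / real n < e / 2" using rn by (simp add: field_simps)
      moreover have "real m / real (n + m) \<le> real m / real n" using rn
        by (intro divide_left_mono) auto
      ultimately have a2: "real m / real (n + m) < e / 2" by linarith
      show "norm (real (r n) / real n - L) < e"
        unfolding real_norm_def abs_less_iff using upper[OF npos] lower[OF npos, of k] k a1 a2 by linarith
    qed
    then show "\<exists>no. \<forall>n\<ge>no. norm (real (r n) / real n - L) < e" by blast
  qed
  then show ?thesis by (rule convergentI)
qed


lemma semigroup_mult_mem:
  fixes C :: "nat set"
  assumes add: "\<And>a b. a \<in> C \<Longrightarrow> b \<in> C \<Longrightarrow> a + b \<in> C" and c: "c \<in> C"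
  shows "Suc k * c \<in> C"
proof (induction k)
  case 0 then show ?case using c by simp
next
  case (Suc k)
  have eq: "Suc (Suc k) * c = Suc k * c + c" by simp
  show ?case by (subst eq) (rule add[OF Suc c])
qed

lemma semigroup_all_large:
  fixes C :: "nat set"
  assumes add: "\<And>a b. a \<in> C \<Longrightarrow> b \<in> C \<Longrightarrow> a + b \<in> C" and g: "Gcd C = 1" and pos: "0 \<notin> C"
  shows "\<exists>N. \<forall>n\<ge>N. n \<in> C"
proof -
  define C0 where "C0 = insert 0 C"
  have add0: "a + b \<in> C0" if "a \<in> C0" "b \<in> C0" for a b
    using that add unfolding C0_def by auto
  have mult0: "k * c \<in> C0" if "c \<in> C0" for k c
  proof (induction k)
    case 0 then show ?case by (simp add: C0_def)
  next
    case (Suc k) then show ?case using add0[OF Suc that] by (simp add: add.commute)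
  qed
  define G where "G = {int a - int b | a b. a \<in> C0 \<and> b \<in> C0}"
  have Gadd: "x + y \<in> G" if xG: "x \<in> G" and yG: "y \<in> G" for x y
  proof -
    obtain a b where ab: "x = int a - int b" "a \<in> C0" "b \<in> C0" using xG unfolding G_def by blast
    obtain c d where cd: "y = int c - int d" "c \<in> C0" "d \<in> C0" using yG unfolding G_def by blast
    have "x + y = int (a + c) - int (b + d)" using ab cd by simp
    then show ?thesis unfolding G_def using add0 ab cd by blast
  qed
  have Gneg: "- x \<in> G" if xG: "x \<in> G" for x
  proof -
    obtain a b where ab: "x = int a - int b" "a \<in> C0" "b \<in> C0" using xG unfolding G_def by blast
    then have "- x = int b - int a" by simp
    then show ?thesis unfolding G_def using ab by blast
  qed
  have GC: "int c \<in> G" if "c \<in> C" for c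
    unfolding G_def C0_def using that by (intro CollectI exI[of _ c] exI[of _ 0]) simp
  have G0: "0 \<in> G" unfolding G_def C0_def by (intro CollectI exI[of _ 0] exI[of _ 0]) simp
  have "C \<noteq> {}" using g by auto
  then obtain c0 where c0: "c0 \<in> C" by blast
  have c0pos: "c0 > 0" using c0 pos by (cases c0) auto
  define d where "d = (LEAST d::nat. d > 0 \<and> int d \<in> G)"
  have dex: "c0 > 0 \<and> int c0 \<in> G" using c0pos GC[OF c0] by simp
  have d1: "d > 0 \<and> int d \<in> G" unfolding d_def by (rule LeastI[of _ c0], rule dex)
  have dmin: "d \<le> e" if "e > 0" "int e \<in> G" for e unfolding d_def by (rule Least_le) (use that in simp)
  have Gmul: "int (q * d) \<in> G" for q
  proof (induction q)
    case 0 then show ?case using G0 by simp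
  next
    case (Suc q)
    have eq: "int (Suc q * d) = int (q * d) + int d" by simp
    show ?case by (subst eq) (rule Gadd[OF Suc d1[THEN conjunct2]])
  qed
  have ddvd: "d dvd c" if "c \<in> C" for c
  proof -
    have "int c = int ((c div d) * d) + int (c mod d)"
      by (metis div_mult_mod_eq of_nat_add)
    then have "int (c mod d) = int c + - int ((c div d) * d)" by linarith
    then have "int (c mod d) \<in> G" using Gadd[OF GC[OF that] Gneg[OF Gmul]] by simp
    moreover have "c mod d < d" using d1 by simp
    ultimately have "c mod d = 0" using dmin[of "c mod d"] by (cases "c mod d = 0") auto
    then show ?thesis by (simp add: mod_eq_0_iff_dvd)
  qed
  have "d dvd Gcd C" by (rule Gcd_greatest) (use ddvd in blast)
  then have "d = 1" using g by simp
  then have "int 1 \<in> G" using d1 by simp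
  then obtain a b where ab: "int 1 = int a - int b" "a \<in> C0" "b \<in> C0" unfolding G_def by blast
  then have a: "a = Suc b" by simp
  show ?thesis
  proof (cases "b = 0")
    case True
    then have "1 \<in> C" using a ab(2) by (simp add: C0_def)
    have "\<forall>n\<ge>1. n \<in> C"
    proof (intro allI impI)
      fix n :: nat assume "1 \<le> n"
      then obtain k where "n = Suc k" by (cases n) auto
      then show "n \<in> C" using semigroup_mult_mem[OF add \<open>1 \<in> C\<close>, of k] by simp
    qed
    then show ?thesis by blast
  next
    case False
    then have bC: "b \<in> C" and b1C: "Suc b \<in> C" using ab a pos by (auto simp: C0_def)
    have "n \<in> C" if "n \<ge> b * b" for n
    proof -
      define q where "q = n div b"
      define t where "t = n mod b"
      have tb: "t < b" using False by (simp add: t_def)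
      have "b * b div b \<le> q" unfolding q_def using that by (rule div_le_mono)
      then have qb: "b \<le> q" using False by simp
      have n: "n = (q - t) * b + t * Suc b"
      proof -
        have "n = q * b + t" unfolding q_def t_def by simp
        also have "\<dots> = (q - t) * b + t * b + t"
        proof -
          have tq: "t \<le> q" using qb tb by simp
          have "(q - t) * b + t * b = q * b" using tq by (metis add_mult_distrib le_add_diff_inverse2)
          then show ?thesis by simp
        qed
        finally show ?thesis by simp
      qed
      have "q - t > 0" using qb tb by simp
      then obtain k where k: "q - t = Suc k" using gr0_implies_Suc by blast
      have "(q - t) * b \<in> C" unfolding k by (rule semigroup_mult_mem[OF add bC])
      moreover have "t * Suc b \<in> C0" by (rule mult0) (use b1C in \<open>simp add: C0_def\<close>)
      ultimately show ?thesis unfolding n using add by (auto simp: C0_def)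
    qed
    then show ?thesis by blast
  qed
qed


lemma lang_length: "w \<in> lang X n \<Longrightarrow> length w = n"
  unfolding lang_def by auto

lemma lang_finite: "finite (lang (X :: (int \<Rightarrow> 'a::finite) set) n)"
proof -
  have "lang X n \<subseteq> {xs. set xs \<subseteq> UNIV \<and> length xs = n}" using lang_length by blast
  moreover have "finite {xs :: 'a list. set xs \<subseteq> UNIV \<and> length xs = n}"
    by (rule finite_lists_length_eq) simp
  ultimately show ?thesis by (rule finite_subset)
qed

lemma lang_nonempty: "X \<noteq> {} \<Longrightarrow> lang X n \<noteq> {}"
  unfolding lang_def by blast

lemma lang_empty: "X = {} \<Longrightarrow> lang X n = {}"
  unfolding lang_def by blast

lemma lang_take: assumes "w \<in> lang X n" "i \<le> n" shows "take i w \<in> lang X i"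
proof -
  obtain x k where w: "w = map (\<lambda>j. x (k + int j)) [0..<n]" "x \<in> X" using assms(1) unfolding lang_def by blast
  have "take i w = map (\<lambda>j. x (k + int j)) [0..<i]" using assms(2) unfolding w by (simp add: take_map)
  then show ?thesis unfolding lang_def using w(2) by blast
qed

lemma lang_drop: assumes "w \<in> lang X n" "i \<le> n" shows "drop i w \<in> lang X (n - i)"
proof -
  obtain x k where w: "w = map (\<lambda>j. x (k + int j)) [0..<n]" "x \<in> X" using assms(1) unfolding lang_def by blast
  have "drop i w = map (\<lambda>j. x ((k + int i) + int j)) [0..<n - i]"
    using assms(2) unfolding w by (intro nth_equalityI) (auto simp: add.assoc)
  then show ?thesis unfolding lang_def using w(2) by blast
qed

lemma lang_snoc: assumes "w \<in> lang X n" shows "\<exists>c. w @ [c] \<in> lang X (Suc n)"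
proof -
  obtain x k where w: "w = map (\<lambda>j. x (k + int j)) [0..<n]" "x \<in> X" using assms(1) unfolding lang_def by blast
  have "w @ [x (k + int n)] = map (\<lambda>j. x (k + int j)) [0..<Suc n]" unfolding w by simp
  then show ?thesis unfolding lang_def using w(2) by blast
qed

lemma hamming_le: "hamming u v \<le> length u"
proof -
  have "{i. i < length u \<and> i < length v \<and> u ! i \<noteq> v ! i} \<subseteq> {..<length u}" by auto
  then show ?thesis unfolding hamming_def by (metis card_lessThan card_mono finite_lessThan)
qed

lemma hamming_append:
  assumes "length u1 = length v1"
  shows "hamming (u1 @ u2) (v1 @ v2) = hamming u1 v1 + hamming u2 v2"
proof -
  define S1 where "S1 = {i. i < length u1 \<and> i < length v1 \<and> u1 ! i \<noteq> v1 ! i}"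
  define S2 where "S2 = {i. i < length u2 \<and> i < length v2 \<and> u2 ! i \<noteq> v2 ! i}"
  have eq: "{i. i < length (u1 @ u2) \<and> i < length (v1 @ v2) \<and> (u1 @ u2) ! i \<noteq> (v1 @ v2) ! i}
      = S1 \<union> (\<lambda>i. i + length u1) ` S2"
  proof (rule set_eqI, rule iffI)
    fix i assume "i \<in> {i. i < length (u1 @ u2) \<and> i < length (v1 @ v2) \<and> (u1 @ u2) ! i \<noteq> (v1 @ v2) ! i}"
    then have i: "i < length (u1 @ u2)" "i < length (v1 @ v2)" "(u1 @ u2) ! i \<noteq> (v1 @ v2) ! i" by auto
    show "i \<in> S1 \<union> (\<lambda>i. i + length u1) ` S2"
    proof (cases "i < length u1")
      case True then show ?thesis using i assms by (auto simp: S1_def nth_append)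
    next
      case False
      then have "i - length u1 \<in> S2" using i assms by (auto simp: S2_def nth_append)
      moreover have "i = (i - length u1) + length u1" using False by simp
      ultimately show ?thesis by blast
    qed
  next
    fix i assume "i \<in> S1 \<union> (\<lambda>i. i + length u1) ` S2"
    then show "i \<in> {i. i < length (u1 @ u2) \<and> i < length (v1 @ v2) \<and> (u1 @ u2) ! i \<noteq> (v1 @ v2) ! i}"
      using assms by (auto simp: S1_def S2_def nth_append)
  qed
  have fin1: "finite S1" unfolding S1_def by auto
  have fin2: "finite S2" unfolding S2_def by auto
  have disj: "S1 \<inter> (\<lambda>i. i + length u1) ` S2 = {}" unfolding S1_def by auto
  have "card (S1 \<union> (\<lambda>i. i + length u1) ` S2) = card S1 + card ((\<lambda>i. i + length u1) ` S2)"
    using fin1 fin2 disj by (intro card_Un_disjoint) auto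
  also have "card ((\<lambda>i. i + length u1) ` S2) = card S2" by (rule card_image) (auto simp: inj_on_def)
  finally show ?thesis unfolding hamming_def eq S1_def S2_def by simp
qed

lemma hamming_append3:
  assumes "length u1 = length v1" "length u2 = length v2"
  shows "hamming (u1 @ u2 @ u3) (v1 @ v2 @ v3) = hamming u1 v1 + hamming u2 v2 + hamming u3 v3"
  using assms by (simp add: hamming_append)



lemma has_path_trans:
  assumes "has_path E a u v" "has_path E b v w" shows "has_path E (a + b) u w"
proof -
  obtain q1 where q1: "q1 0 = u" "q1 a = v" "\<forall>i<a. \<exists>c. (q1 i, c, q1 (Suc i)) \<in> E"
    using assms(1) unfolding has_path_def by blast
  obtain q2 where q2: "q2 0 = v" "q2 b = w" "\<forall>i<b. \<exists>c. (q2 i, c, q2 (Suc i)) \<in> E"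
    using assms(2) unfolding has_path_def by blast
  define q where "q i = (if i \<le> a then q1 i else q2 (i - a))" for i
  have "\<exists>c. (q i, c, q (Suc i)) \<in> E" if "i < a + b" for i
  proof (cases "i < a")
    case True then show ?thesis using q1 by (auto simp: q_def)
  next
    case False
    then have ib: "i - a < b" using that by auto
    have qi: "q i = q2 (i - a)" using False q1(2) q2(1) by (cases "i = a") (auto simp: q_def)
    have qs: "q (Suc i) = q2 (Suc (i - a))" using False by (auto simp: q_def Suc_diff_le)
    show ?thesis unfolding qi qs using q2(3) ib by blast
  qed
  moreover have "q 0 = u" "q (a + b) = w" using q1 q2 by (auto simp: q_def)
  ultimately show ?thesis unfolding has_path_def by blast
qed

lemma has_path_0: "has_path E 0 u v \<Longrightarrow> u = v"
  unfolding has_path_def by auto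

lemma primitive_exp:
  assumes lg: "labeled_graph V E" and pg: "primitive_graph V E"
  shows "\<exists>m. \<forall>u\<in>V. \<forall>v\<in>V. has_path E m u v"
proof -
  define S where "S = {n. n > 0 \<and> (\<exists>u\<in>V. has_path E n u u)}"
  have gS: "Gcd S = 1" and irr: "\<forall>u\<in>V. \<forall>v\<in>V. \<exists>n. has_path E n u v"
    using pg unfolding primitive_graph_def irreducible_graph_def S_def by auto
  have "S \<noteq> {}" using gS by auto
  then obtain v0 where v0: "v0 \<in> V" unfolding S_def by blast
  define C where "C = {n. n > 0 \<and> has_path E n v0 v0}"
  have addC: "a + b \<in> C" if "a \<in> C" "b \<in> C" for a b
  proof -
    have "a > 0" "has_path E a v0 v0" "b > 0" "has_path E b v0 v0" using that unfolding C_def by auto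
    then show ?thesis unfolding C_def using has_path_trans by simp
  qed
  have "Gcd C dvd n" if "n \<in> S" for n
  proof -
    obtain u where u: "u \<in> V" "has_path E n u u" "n > 0" using \<open>n \<in> S\<close> unfolding S_def by blast
    obtain p where p: "has_path E p v0 u" using irr v0 u by blast
    obtain q where q: "has_path E q u v0" using irr v0 u by blast
    show ?thesis
    proof (cases "p + q = 0")
      case True
      then have "v0 = u" using p has_path_0 by auto
      then have "n \<in> C" using u unfolding C_def by simp
      then show ?thesis by (rule Gcd_dvd)
    next
      case False
      have "has_path E (p + q) v0 v0" by (rule has_path_trans[OF p q])
      then have c1: "p + q \<in> C" using False unfolding C_def by simp
      have "has_path E (p + n + q) v0 v0" by (rule has_path_trans[OF has_path_trans[OF p u(2)] q])
      then have c2: "p + n + q \<in> C" using u unfolding C_def by simp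
      have "Gcd C dvd p + q" "Gcd C dvd p + n + q" using c1 c2 by (auto intro: Gcd_dvd)
      then show ?thesis by (metis add.commute add.left_commute dvd_add_right_iff)
    qed
  qed
  then have "Gcd C dvd Gcd S" by (rule Gcd_greatest)
  then have gC: "Gcd C = 1" using gS by (simp only: nat_dvd_1_iff_1)
  have C0: "0 \<notin> C" unfolding C_def by simp
  have "\<exists>N. \<forall>n\<ge>N. n \<in> C"
  proof (rule semigroup_all_large[of C])
    show "\<And>a b. a \<in> C \<Longrightarrow> b \<in> C \<Longrightarrow> a + b \<in> C" by (rule addC)
  qed (fact gC, fact C0)
  then obtain N where N: "\<forall>n\<ge>N. n \<in> C" by blast
  define pf where "pf u = (SOME p. has_path E p u v0)" for u
  define qf where "qf u = (SOME p. has_path E p v0 u)" for u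
  have pf: "has_path E (pf u) u v0" if "u \<in> V" for u
    unfolding pf_def by (rule someI_ex) (use irr v0 that in blast)
  have qf: "has_path E (qf u) v0 u" if "u \<in> V" for u
    unfolding qf_def by (rule someI_ex) (use irr v0 that in blast)
  have finV: "finite V" using lg unfolding labeled_graph_def by simp
  define P where "P = Max (pf ` V \<union> qf ` V)"
  have Pb: "pf u \<le> P" "qf u \<le> P" if "u \<in> V" for u
    unfolding P_def using finV that by (simp_all add: Max_ge)
  have "has_path E (N + 2 * P) u v" if "u \<in> V" "v \<in> V" for u v
  proof -
    define L where "L = N + 2 * P - pf u - qf v"
    have b1: "pf u \<le> P" "qf v \<le> P" using Pb that by auto
    have LN: "L \<ge> N" unfolding L_def using b1 by arith
    then have "L \<in> C" using N by simp
    then have "has_path E L v0 v0" unfolding C_def by simp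
    then have "has_path E (pf u + L + qf v) u v"
      by (rule has_path_trans[OF has_path_trans[OF pf[OF that(1)]] qf[OF that(2)]])
    moreover have "pf u + L + qf v = N + 2 * P" unfolding L_def using b1 by arith
    ultimately show ?thesis by simp
  qed
  then show ?thesis by blast
qed



lemma connector:
  assumes EV: "E \<subseteq> V \<times> UNIV \<times> V" and hp: "\<forall>u\<in>V. \<forall>v\<in>V. has_path E m u v"
    and u: "u \<in> lang (presented E) a" and v: "v \<in> lang (presented E) b"
  shows "\<exists>w. length w = m \<and> u @ w @ v \<in> lang (presented E) (a + m + b)"
proof -
  obtain y k where u_eq: "u = map (\<lambda>j. y (k + int j)) [0..<a]" and "y \<in> presented E"
    using u unfolding lang_def by blast
  then obtain p where p: "\<And>i. (p i, y i, p (i + 1)) \<in> E" unfolding presented_def by blast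
  obtain z l where v_eq: "v = map (\<lambda>j. z (l + int j)) [0..<b]" and "z \<in> presented E"
    using v unfolding lang_def by blast
  then obtain pz where pz: "\<And>i. (pz i, z i, pz (i + 1)) \<in> E" unfolding presented_def by blast
  define K where "K = k + int a"
  have v1: "p K \<in> V" using p[of K] EV by auto
  have v2: "pz l \<in> V" using pz[of l] EV by auto
  obtain q where q: "q 0 = p K" "q m = pz l" "\<forall>i<m. \<exists>c. (q i, c, q (Suc i)) \<in> E"
    using hp v1 v2 unfolding has_path_def by blast
  obtain lab where lab: "\<And>i. i < m \<Longrightarrow> (q i, lab i, q (Suc i)) \<in> E" using q(3) by metis
  define s where "s i = (if i < K then y i else if i < K + int m then lab (nat (i - K))
      else z (i - (K + int m) + l))" for i
  define pp where "pp i = (if i \<le> K then p i else if i \<le> K + int m then q (nat (i - K))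
      else pz (i - (K + int m) + l))" for i
  have edge: "(pp i, s i, pp (i + 1)) \<in> E" for i
  proof (cases "i < K")
    case True then show ?thesis using p[of i] by (simp add: pp_def s_def)
  next
    case False
    show ?thesis
    proof (cases "i < K + int m")
      case True
      define j where "j = nat (i - K)"
      have jm: "j < m" using True False unfolding j_def by simp
      have ppi: "pp i = q j"
      proof (cases "i = K")
        case True then show ?thesis using q(1) by (simp add: pp_def j_def)
      next
        case ne: False then show ?thesis using \<open>\<not> i < K\<close> True by (simp add: pp_def j_def)
      qed
      have e1: "nat (i + 1 - K) = Suc j" using False unfolding j_def by simp
      have pps: "pp (i + 1) = q (Suc j)" using True False e1 unfolding pp_def by simp
      have si: "s i = lab j" using True False by (simp add: s_def j_def)
      show ?thesis unfolding ppi pps si using lab[OF jm] .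
    next
      case ge: False
      define j where "j = i - (K + int m) + l"
      have ppi: "pp i = pz j"
      proof (cases "i = K + int m")
        case True
        show ?thesis
        proof (cases "m = 0")
          case True then show ?thesis using \<open>i = K + int m\<close> q(1,2) by (simp add: pp_def j_def)
        next
          case False then show ?thesis using \<open>i = K + int m\<close> q(2) by (simp add: pp_def j_def)
        qed
      next
        case ne: False then show ?thesis using ge False by (simp add: pp_def j_def)
      qed
      have pps: "pp (i + 1) = pz (j + 1)" using ge False unfolding pp_def j_def by (simp add: algebra_simps)
      have si: "s i = z j" using ge False by (simp add: s_def j_def)
      show ?thesis unfolding ppi pps si using pz[of j] .
    qed
  qed
  then have sP: "s \<in> presented E" unfolding presented_def by blast
  define w where "w = map lab [0..<m]"
  have "u @ w @ v = map (\<lambda>j. s (k + int j)) [0..<a + m + b]"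
  proof (rule nth_equalityI)
    show "length (u @ w @ v) = length (map (\<lambda>j. s (k + int j)) [0..<a + m + b])"
      by (simp add: u_eq v_eq w_def)
  next
    fix i assume "i < length (u @ w @ v)"
    then have i: "i < a + m + b" by (simp add: u_eq v_eq w_def)
    show "(u @ w @ v) ! i = map (\<lambda>j. s (k + int j)) [0..<a + m + b] ! i"
    proof (cases "i < a")
      case True then show ?thesis using i by (simp add: u_eq nth_append s_def K_def)
    next
      case na: False
      show ?thesis
      proof (cases "i < a + m")
        case True
        have "nat (k + int i - K) = i - a" using na unfolding K_def by simp
        moreover have "i - a < m" using True na by simp
        ultimately show ?thesis using True na i by (simp add: u_eq w_def nth_append s_def K_def)
      next
        case False
        have nm: "\<not> i - a < m" using False by simp
        have "(u @ w @ v) ! i = v ! (i - a - m)" using na nm by (simp add: u_eq w_def nth_append)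
        also have "\<dots> = z (l + int (i - a - m))"
        proof -
          have "i - a - m < b" using False i by simp
          then show ?thesis by (simp add: v_eq)
        qed
        also have "\<dots> = s (k + int i)" using na False by (simp add: s_def K_def algebra_simps of_nat_diff)
        finally show ?thesis using i by simp
      qed
    qed
  qed
  then have "u @ w @ v \<in> lang (presented E) (a + m + b)" unfolding lang_def using sP by blast
  moreover have "length w = m" by (simp add: w_def)
  ultimately show ?thesis by blast
qed



lemma rad_le: "finite C \<Longrightarrow> x \<in> C \<Longrightarrow> Min ((\<lambda>x. hamming x y) ` C) \<le> hamming x y"
  by (rule Min_le) auto

lemma rad_ex: "finite C \<Longrightarrow> C \<noteq> {} \<Longrightarrow> \<exists>x\<in>C. hamming x y = Min ((\<lambda>x. hamming x y) ` C)"
proof -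
  assume "finite C" "C \<noteq> {}"
  then have "Min ((\<lambda>x. hamming x y) ` C) \<in> (\<lambda>x. hamming x y) ` C" by (intro Min_in) auto
  then show ?thesis by force
qed

lemma cr_ge: "finite A \<Longrightarrow> y \<in> A \<Longrightarrow> Min ((\<lambda>x. hamming x y) ` C) \<le> covering_radius C A"
  unfolding covering_radius_def by (rule Max_ge) auto

lemma cr_ex: "finite A \<Longrightarrow> A \<noteq> {} \<Longrightarrow> \<exists>y\<in>A. covering_radius C A = Min ((\<lambda>x. hamming x y) ` C)"
proof -
  assume "finite A" "A \<noteq> {}"
  then have "covering_radius C A \<in> (\<lambda>y. Min ((\<lambda>x. hamming x y) ` C)) ` A"
    unfolding covering_radius_def by (intro Max_in) auto
  then show ?thesis by force
qed

definition crn :: "(int \<Rightarrow> 'a) set \<Rightarrow> (int \<Rightarrow> 'a) set \<Rightarrow> nat \<Rightarrow> nat" where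
  "crn X Y n = covering_radius (lang X n) (lang Y n)"

definition conn :: "(int \<Rightarrow> 'a) set \<Rightarrow> nat \<Rightarrow> bool" where
  "conn Z m \<longleftrightarrow> (\<forall>a b u v. u \<in> lang Z a \<longrightarrow> v \<in> lang Z b \<longrightarrow>
     (\<exists>w. length w = m \<and> u @ w @ v \<in> lang Z (a + m + b)))"

context
  fixes X Y :: "(int \<Rightarrow> 'a::finite) set"
  assumes X: "X \<noteq> {}" and Y: "Y \<noteq> {}"
begin

lemma fin: "finite (lang X n)" "finite (lang Y n)" by (rule lang_finite)+

lemma neX: "lang X n \<noteq> {}" by (rule lang_nonempty[OF X])
lemma neY: "lang Y n \<noteq> {}" by (rule lang_nonempty[OF Y])
lemmas ne = neX neY

lemma cr_bnd: "crn X Y n \<le> n"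
proof -
  obtain y where y: "y \<in> lang Y n" "crn X Y n = Min ((\<lambda>x. hamming x y) ` lang X n)"
    using cr_ex[OF fin(2) ne(2)] unfolding crn_def by blast
  obtain x where x: "x \<in> lang X n" using ne(1) by blast
  have "crn X Y n \<le> hamming x y" unfolding y(2) by (rule rad_le[OF fin(1) x])
  also have "\<dots> \<le> length x" by (rule hamming_le)
  finally show ?thesis using lang_length[OF x] by simp
qed

lemma cr_mono: "crn X Y n \<le> crn X Y (Suc n)"
proof -
  obtain y where y: "y \<in> lang Y n" "crn X Y n = Min ((\<lambda>x. hamming x y) ` lang X n)"
    using cr_ex[OF fin(2) ne(2)] unfolding crn_def by blast
  obtain c where yc: "y @ [c] \<in> lang Y (Suc n)" using lang_snoc[OF y(1)] by blast
  obtain x' where x': "x' \<in> lang X (Suc n)" "hamming x' (y @ [c]) = Min ((\<lambda>x. hamming x (y @ [c])) ` lang X (Suc n))"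
    using rad_ex[OF fin(1) ne(1)] by blast
  have tx: "take n x' \<in> lang X n" using lang_take[OF x'(1)] by simp
  have lx: "length (take n x') = length y" using lang_length[OF x'(1)] lang_length[OF y(1)] by simp
  have "crn X Y n \<le> hamming (take n x') y" unfolding y(2) by (rule rad_le[OF fin(1) tx])
  also have "\<dots> \<le> hamming (take n x' @ drop n x') (y @ [c])" using hamming_append[OF lx, of "drop n x'" "[c]"] by simp
  also have "\<dots> = hamming x' (y @ [c])" by simp
  also have "\<dots> \<le> crn X Y (Suc n)" unfolding x'(2) crn_def by (rule cr_ge[OF fin(2) yc])
  finally show ?thesis .
qed

lemma cr_lip: "crn X Y (Suc n) \<le> crn X Y n + 1"
proof -
  obtain y' where y': "y' \<in> lang Y (Suc n)" "crn X Y (Suc n) = Min ((\<lambda>x. hamming x y') ` lang X (Suc n))"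
    using cr_ex[OF fin(2) ne(2)] unfolding crn_def by blast
  have ty: "take n y' \<in> lang Y n" using lang_take[OF y'(1)] by simp
  obtain x where x: "x \<in> lang X n" "hamming x (take n y') = Min ((\<lambda>x. hamming x (take n y')) ` lang X n)"
    using rad_ex[OF fin(1) ne(1)] by blast
  obtain c where xc: "x @ [c] \<in> lang X (Suc n)" using lang_snoc[OF x(1)] by blast
  have lx: "length x = length (take n y')" using lang_length[OF x(1)] lang_length[OF ty] by simp
  have "crn X Y (Suc n) \<le> hamming (x @ [c]) y'" unfolding y'(2) by (rule rad_le[OF fin(1) xc])
  also have "\<dots> = hamming (x @ [c]) (take n y' @ drop n y')" by simp
  also have "\<dots> = hamming x (take n y') + hamming [c] (drop n y')" by (rule hamming_append[OF lx])
  also have "\<dots> \<le> hamming x (take n y') + 1" using hamming_le[of "[c]"] by simp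
  also have "hamming x (take n y') \<le> crn X Y n" unfolding x(2) crn_def by (rule cr_ge[OF fin(2) ty])
  finally show ?thesis by simp
qed

lemma cr_superY:
  assumes "conn Y m" shows "crn X Y a + crn X Y b \<le> crn X Y (a + m + b)"
proof -
  obtain y1 where y1: "y1 \<in> lang Y a" "crn X Y a = Min ((\<lambda>x. hamming x y1) ` lang X a)"
    using cr_ex[OF fin(2) ne(2)] unfolding crn_def by blast
  obtain y2 where y2: "y2 \<in> lang Y b" "crn X Y b = Min ((\<lambda>x. hamming x y2) ` lang X b)"
    using cr_ex[OF fin(2) ne(2)] unfolding crn_def by blast
  obtain w where w: "length w = m" "y1 @ w @ y2 \<in> lang Y (a + m + b)"
    using assms y1(1) y2(1) unfolding conn_def by blast
  obtain x' where x': "x' \<in> lang X (a + m + b)"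
    "hamming x' (y1 @ w @ y2) = Min ((\<lambda>x. hamming x (y1 @ w @ y2)) ` lang X (a + m + b))"
    using rad_ex[OF fin(1) ne(1)] by blast
  define rest where "rest = drop a x'"
  have x1: "take a x' \<in> lang X a" using lang_take[OF x'(1)] by simp
  have r: "rest \<in> lang X (m + b)" using lang_drop[OF x'(1), of a] unfolding rest_def by simp
  have x2: "drop m rest \<in> lang X b" using lang_drop[OF r, of m] by simp
  have l1: "length (take a x') = length y1" using lang_length[OF x1] lang_length[OF y1(1)] by simp
  have l2: "length (take m rest) = length w" using lang_length[OF r] w(1) by simp
  have dec: "x' = take a x' @ take m rest @ drop m rest" unfolding rest_def by (metis append_take_drop_id)
  have "crn X Y a + crn X Y b \<le> hamming (take a x') y1 + hamming (drop m rest) y2"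
    unfolding y1(2) y2(2) by (intro add_mono rad_le[OF fin(1) x1] rad_le[OF fin(1) x2])
  also have "\<dots> \<le> hamming (take a x' @ take m rest @ drop m rest) (y1 @ w @ y2)"
    unfolding hamming_append3[OF l1 l2] by simp
  also have "\<dots> = hamming x' (y1 @ w @ y2)" using dec by simp
  also have "\<dots> \<le> crn X Y (a + m + b)" unfolding x'(2) crn_def by (rule cr_ge[OF fin(2) w(2)])
  finally show ?thesis .
qed

lemma cr_subX:
  assumes "conn X m" shows "crn X Y (a + m + b) \<le> crn X Y a + crn X Y b + m"
proof -
  obtain y' where y': "y' \<in> lang Y (a + m + b)"
    "crn X Y (a + m + b) = Min ((\<lambda>x. hamming x y') ` lang X (a + m + b))"
    using cr_ex[OF fin(2) ne(2)] unfolding crn_def by blast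
  define rest where "rest = drop a y'"
  have y1: "take a y' \<in> lang Y a" using lang_take[OF y'(1)] by simp
  have r: "rest \<in> lang Y (m + b)" using lang_drop[OF y'(1), of a] unfolding rest_def by simp
  have y2: "drop m rest \<in> lang Y b" using lang_drop[OF r, of m] by simp
  obtain x1 where x1: "x1 \<in> lang X a" "hamming x1 (take a y') = Min ((\<lambda>x. hamming x (take a y')) ` lang X a)"
    using rad_ex[OF fin(1) ne(1)] by blast
  obtain x2 where x2: "x2 \<in> lang X b" "hamming x2 (drop m rest) = Min ((\<lambda>x. hamming x (drop m rest)) ` lang X b)"
    using rad_ex[OF fin(1) ne(1)] by blast
  obtain w where w: "length w = m" "x1 @ w @ x2 \<in> lang X (a + m + b)"
    using assms x1(1) x2(1) unfolding conn_def by blast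
  have l1: "length x1 = length (take a y')" using lang_length[OF x1(1)] lang_length[OF y1] by simp
  have l2: "length w = length (take m rest)" using lang_length[OF r] w(1) by simp
  have dec: "y' = take a y' @ take m rest @ drop m rest" unfolding rest_def by (metis append_take_drop_id)
  have "crn X Y (a + m + b) \<le> hamming (x1 @ w @ x2) y'" unfolding y'(2) by (rule rad_le[OF fin(1) w(2)])
  also have "\<dots> = hamming (x1 @ w @ x2) (take a y' @ take m rest @ drop m rest)" using dec by simp
  also have "\<dots> = hamming x1 (take a y') + hamming w (take m rest) + hamming x2 (drop m rest)"
    by (rule hamming_append3[OF l1 l2])
  also have "\<dots> \<le> crn X Y a + m + crn X Y b"
  proof (intro add_mono)
    show "hamming x1 (take a y') \<le> crn X Y a" unfolding x1(2) crn_def by (rule cr_ge[OF fin(2) y1])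
    show "hamming w (take m rest) \<le> m" using hamming_le[of w] w(1) by simp
    show "hamming x2 (drop m rest) \<le> crn X Y b" unfolding x2(2) crn_def by (rule cr_ge[OF fin(2) y2])
  qed
  finally show ?thesis by simp
qed

end



lemma prim_conn:
  assumes "primitive_system (Z :: (int \<Rightarrow> 'a) set)" shows "\<exists>m. conn Z m"
proof -
  obtain V :: "nat set" and E where lg: "labeled_graph V E" and pg: "primitive_graph V E" and Z: "Z = presented E"
    using assms unfolding primitive_system_def by blast
  obtain m where m: "\<forall>u\<in>V. \<forall>v\<in>V. has_path E m u v" using primitive_exp[OF lg pg] by blast
  have EV: "E \<subseteq> V \<times> UNIV \<times> V" using lg unfolding labeled_graph_def by simp
  have "conn Z m" unfolding conn_def Z using connector[OF EV m] by blast
  then show ?thesis by blast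
qed

lemma const_case:
  fixes X Y :: "(int \<Rightarrow> 'a) set"
  assumes "X = {} \<or> Y = {}"
  shows "\<exists>c. \<forall>n. covering_radius (lang X n) (lang Y n) = c"
proof (cases "Y = {}")
  case True
  then show ?thesis by (simp add: lang_empty covering_radius_def)
next
  case False
  then have "X = {}" using assms by simp
  have "covering_radius (lang X n) (lang Y n) = Min ((\<lambda>x. hamming x []) ` {})" for n
  proof -
    have "lang Y n \<noteq> {}" by (rule lang_nonempty[OF False])
    then show ?thesis unfolding covering_radius_def lang_empty[OF \<open>X = {}\<close>] by (simp add: image_constant_conv)
  qed
  then show ?thesis by blast
qed

theorem proposition7:
  fixes X Y :: "(int \<Rightarrow> 'a::finite) set"
  assumes "constrained_system X" and "constrained_system Y"
    and "primitive_system X \<or> primitive_system Y"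
  shows "convergent (\<lambda>n. real (covering_radius (lang X n) (lang Y n)) / real n)
    \<and> R_shift X Y = ereal (lim (\<lambda>n. real (covering_radius (lang X n) (lang Y n)) / real n))"
proof -
  define f where "f n = real (covering_radius (lang X n) (lang Y n)) / real n" for n
  have conv: "convergent f"
  proof (cases "X = {} \<or> Y = {}")
    case True
    obtain c where c: "\<And>n. covering_radius (lang X n) (lang Y n) = c" using const_case[OF True] by blast
    have "(\<lambda>n. real c / real n) \<longlonglongrightarrow> 0" by (rule lim_const_over_n)
    then show ?thesis unfolding f_def c by (rule convergentI)
  next
    case False
    then have X: "X \<noteq> {}" and Y: "Y \<noteq> {}" by auto
    have fc: "f = (\<lambda>n. real (crn X Y n) / real n)" unfolding f_def crn_def by simp
    show ?thesis
    proof (cases "primitive_system Y")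
      case True
      obtain m where m: "conn Y m" using prim_conn[OF True] by blast
      show ?thesis unfolding fc
        by (rule fekete_gap[of "crn X Y" m]) (use cr_bnd[OF X Y] cr_mono[OF X Y] cr_superY[OF X Y m] in auto)
    next
      case False
      then have "primitive_system X" using assms(3) by simp
      obtain m where m: "conn X m" using prim_conn[OF \<open>primitive_system X\<close>] by blast
      define s where "s n = n - crn X Y n" for n
      have bnd: "crn X Y n \<le> n" for n by (rule cr_bnd[OF X Y])
      have "convergent (\<lambda>n. real (s n) / real n)"
      proof (rule fekete_gap[of s m])
        show "s n \<le> n" for n unfolding s_def by simp
        show "s n \<le> s (Suc n)" for n unfolding s_def using cr_lip[OF X Y, of n] bnd[of n] by simp
        show "s a + s b \<le> s (a + m + b)" for a b
          unfolding s_def using cr_subX[OF X Y m, of a b] bnd[of a] bnd[of b] bnd[of "a + m + b"] by simp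
      qed
      then obtain L where L: "(\<lambda>n. real (s n) / real n) \<longlonglongrightarrow> L" by (auto simp: convergent_def)
      have "(\<lambda>n. 1 - real (s n) / real n) \<longlonglongrightarrow> 1 - L" by (intro tendsto_intros L)
      moreover have "eventually (\<lambda>n. 1 - real (s n) / real n = f n) sequentially"
      proof (rule eventually_sequentiallyI[of 1])
        fix n :: nat assume n: "1 \<le> n"
        have "real (s n) = real n - real (crn X Y n)" unfolding s_def using bnd[of n] by (simp add: of_nat_diff)
        then show "1 - real (s n) / real n = f n" using n unfolding fc by (simp add: field_simps)
      qed
      ultimately have "f \<longlonglongrightarrow> 1 - L" by (rule Lim_transform_eventually)
      then show ?thesis by (rule convergentI)
    qed
  qed
  then have lim: "f \<longlonglongrightarrow> lim f" by (simp add: convergent_LIMSEQ_iff)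
  have "R_shift X Y = liminf (\<lambda>n. ereal (f n))" unfolding R_shift_def f_def by simp
  also have "\<dots> = ereal (lim f)"
    by (rule lim_imp_Liminf) (simp_all add: lim)
  finally show ?thesis using conv unfolding f_def by simp
qed


end
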